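(* Let $K$ be an arc of bounded rotation in $\mathbb{C}=\mathbb{R}^2$ and let $z=(z_1,z_2):[0,s(K)]\to\mathbb{R}^2$ be its arc length parameterization. Then $z$ is $\delta$-convex: each component $z_i$ ($i=1,2$) can be written as $z_i=g_i-f_i$ where $g_i,f_i:[0,s(K)]\to\mathbb{R}$ are continuous convex functions.
   Context: An arc is the image of a continuous injective map $[a,b]\to\mathbb{C}$, up to increasing reparameterization. A broken line inscribed in $K$ has the same extremities as $K$ and vertices on $K$ ordered along $K$. The absolute rotation of a broken line is the sum over interior vertices of angles in $[0,\pi]$ between directions of consecutive segments; $|\kappa|(K)$ is the supremum of absolute rotations of inscribed broken lines, and $K$ has bounded rotation if $|\kappa|(K)<\infty$. $s(K)$ is the Euclidean length, and the arc length parameterization satisfies $t_2-t_1=s(K|_{t_1,t_2})$. *)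

theory Defs
  imports "HOL-Analysis.Analysis"
begin

definition is_arc :: "(real \<Rightarrow> complex) \<Rightarrow> real \<Rightarrow> real \<Rightarrow> bool" where
  "is_arc \<gamma> a b \<longleftrightarrow> a < b \<and> continuous_on {a..b} \<gamma> \<and> inj_on \<gamma> {a..b}"

definition inscribed_params :: "real \<Rightarrow> real \<Rightarrow> (nat \<Rightarrow> real) \<Rightarrow> nat \<Rightarrow> bool" where
  "inscribed_params a b t n \<longleftrightarrow> 1 \<le> n \<and> t 0 = a \<and> t n = b \<and> (\<forall>i<n. t i < t (Suc i))"

definition vangle :: "complex \<Rightarrow> complex \<Rightarrow> real" where
  "vangle u v = arccos ((u \<bullet> v) / (norm u * norm v))"

definition broken_line_rotation :: "(real \<Rightarrow> complex) \<Rightarrow> (nat \<Rightarrow> real) \<Rightarrow> nat \<Rightarrow> real" where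
  "broken_line_rotation \<gamma> t n =
     (\<Sum>i\<in>{1..<n}. vangle (\<gamma> (t i) - \<gamma> (t (i - 1))) (\<gamma> (t (Suc i)) - \<gamma> (t i)))"

definition broken_line_length :: "(real \<Rightarrow> complex) \<Rightarrow> (nat \<Rightarrow> real) \<Rightarrow> nat \<Rightarrow> real" where
  "broken_line_length \<gamma> t n = (\<Sum>i<n. cmod (\<gamma> (t (Suc i)) - \<gamma> (t i)))"

definition abs_curvature :: "(real \<Rightarrow> complex) \<Rightarrow> real \<Rightarrow> real \<Rightarrow> ereal" where
  "abs_curvature \<gamma> a b =
     (SUP p \<in> {(t, n). inscribed_params a b t n}. ereal (broken_line_rotation \<gamma> (fst p) (snd p)))"

definition bounded_rotation :: "(real \<Rightarrow> complex) \<Rightarrow> real \<Rightarrow> real \<Rightarrow> bool" where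
  "bounded_rotation \<gamma> a b \<longleftrightarrow> abs_curvature \<gamma> a b < \<infinity>"

definition arc_len :: "(real \<Rightarrow> complex) \<Rightarrow> real \<Rightarrow> real \<Rightarrow> ereal" where
  "arc_len \<gamma> a b =
     (SUP p \<in> {(t, n). inscribed_params a b t n}. ereal (broken_line_length \<gamma> (fst p) (snd p)))"

end

theory Submission
  imports Defs
begin


definition slp :: "(real \<Rightarrow> real) \<Rightarrow> real list \<Rightarrow> nat \<Rightarrow> real" where
 "slp h xs k = (h (xs!Suc k) - h (xs!k)) / (xs!Suc k - xs!k)"
definition svar :: "(real \<Rightarrow> real) \<Rightarrow> real list \<Rightarrow> real" where
 "svar h xs = (\<Sum>k\<in>{1..<length xs - 1}. \<bar>slp h xs k - slp h xs (k-1)\<bar>)"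
definition FP :: "(real \<Rightarrow> real) \<Rightarrow> real list \<Rightarrow> real \<Rightarrow> real" where
 "FP h xs x = (\<Sum>k\<in>{1..<length xs - 1}. \<bar>slp h xs k - slp h xs (k-1)\<bar> * max 0 (x - xs!k))"
definition HP :: "(real \<Rightarrow> real) \<Rightarrow> real list \<Rightarrow> real \<Rightarrow> real" where
 "HP h xs x = h (xs!0) + slp h xs 0 * (x - xs!0) +
    (\<Sum>k\<in>{1..<length xs - 1}. (slp h xs k - slp h xs (k-1)) * max 0 (x - xs!k))"

lemma telescope1: fixes j :: nat shows "(\<Sum>k\<in>{1..j}. (f k - f (k-1)) :: real) = f j - f 0"
  by (induction j) (auto simp: sum.atLeast_Suc_atMost_Suc_shift)

lemma sw_le: fixes xs :: "real list" shows "sorted_wrt (<) xs \<Longrightarrow> i \<le> j \<Longrightarrow> j < length xs \<Longrightarrow> xs!i \<le> xs!j"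
proof (cases "i < j")
  case True
  assume "sorted_wrt (<) xs" "j < length xs"
  then have "xs!i < xs!j" using True by (simp add: sorted_wrt_iff_nth_less)
  then show ?thesis by simp
next
  case False
  assume "i \<le> j"
  then show ?thesis using False by simp
qed

lemma sw_less: fixes xs :: "real list" shows "sorted_wrt (<) xs \<Longrightarrow> i < j \<Longrightarrow> j < length xs \<Longrightarrow> xs!i < xs!j"
  by (auto simp: sorted_wrt_iff_nth_less)

lemma HP_interp:
  assumes s: "sorted_wrt (<) xs" and j: "j < length xs"
  shows "HP h xs (xs!j) = h (xs!j)"
  using j
proof (induction j)
  case 0
  have "(\<Sum>k\<in>{1..<length xs - 1}. (slp h xs k - slp h xs (k-1)) * max 0 (xs!0 - xs!k)) = 0"
  proof (rule sum.neutral, intro ballI)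
    fix k assume "k \<in> {1..<length xs - 1}"
    then have "xs!0 < xs!k" using s by (auto simp: sorted_wrt_iff_nth_less)
    then show "(slp h xs k - slp h xs (k-1)) * max 0 (xs!0 - xs!k) = 0" by simp
  qed
  then show ?case by (simp add: HP_def)
next
  case (Suc j)
  define m where "m = length xs - 1"
  have jm: "j < m" using Suc.prems m_def by simp
  have IH: "HP h xs (xs!j) = h (xs!j)" using Suc by simp
  define D where "D = xs!Suc j - xs!j"
  have Dpos: "D > 0" using s Suc.prems by (auto simp: D_def sorted_wrt_iff_nth_less)
  have sum_eq: "(\<Sum>k\<in>{1..<m}. (slp h xs k - slp h xs (k-1)) * max 0 (xs!Suc j - xs!k))
      - (\<Sum>k\<in>{1..<m}. (slp h xs k - slp h xs (k-1)) * max 0 (xs!j - xs!k))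
      = (\<Sum>k\<in>{1..j}. (slp h xs k - slp h xs (k-1)) * D)"
  proof -
    have "(\<Sum>k\<in>{1..<m}. (slp h xs k - slp h xs (k-1)) * max 0 (xs!Suc j - xs!k))
      - (\<Sum>k\<in>{1..<m}. (slp h xs k - slp h xs (k-1)) * max 0 (xs!j - xs!k))
      = (\<Sum>k\<in>{1..<m}. (if k \<le> j then (slp h xs k - slp h xs (k-1)) * D else 0))"
      unfolding sum_subtractf[symmetric]
    proof (rule sum.cong[OF refl])
      fix k assume k: "k \<in> {1..<m}"
      show "(slp h xs k - slp h xs (k-1)) * max 0 (xs!Suc j - xs!k) - (slp h xs k - slp h xs (k-1)) * max 0 (xs!j - xs!k)
         = (if k \<le> j then (slp h xs k - slp h xs (k-1)) * D else 0)"
      proof (cases "k \<le> j")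
        case True
        have "xs!k \<le> xs!j" using s True Suc.prems by (intro sw_le) auto
        moreover have "xs!k < xs!Suc j" using s True Suc.prems
          by (auto simp: sorted_wrt_iff_nth_less)
        ultimately show ?thesis using True by (simp add: D_def algebra_simps)
      next
        case False
        then have "Suc j \<le> k" by simp
        then have "xs!Suc j \<le> xs!k" using s k m_def by (intro sw_le) auto
        moreover have "xs!j < xs!k" using s False k m_def by (auto simp: sorted_wrt_iff_nth_less)
        ultimately show ?thesis using False by simp
      qed
    qed
    also have "\<dots> = (\<Sum>k\<in>{1..j}. (slp h xs k - slp h xs (k-1)) * D)"
    proof -
      have "{1..j} = {k\<in>{1..<m}. k \<le> j}" using jm by auto
      then show ?thesis by (simp add: sum.If_cases Int_def)
    qed
    finally show ?thesis .
  qed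
  have "(\<Sum>k\<in>{1..j}. (slp h xs k - slp h xs (k-1)) * D) = (slp h xs j - slp h xs 0) * D"
    by (simp only: sum_distrib_right[symmetric] telescope1)
  then have "HP h xs (xs!Suc j) - HP h xs (xs!j) = slp h xs j * D"
    using sum_eq unfolding HP_def m_def[symmetric] by (simp add: D_def algebra_simps)
  also have "\<dots> = h (xs!Suc j) - h (xs!j)" using Dpos by (simp add: slp_def D_def)
  finally show ?case using IH by simp
qed

lemma max0_convex_ineq:
  fixes u v x y p :: real
  assumes "u \<ge> 0" "v \<ge> 0" "u + v = 1"
  shows "max 0 (u * x + v * y - p) \<le> u * max 0 (x - p) + v * max 0 (y - p)"
proof -
  have a: "u * max 0 (x - p) \<ge> u * (x - p)" "v * max 0 (y - p) \<ge> v * (y - p)"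
    using assms by (auto intro: mult_left_mono)
  have b: "u * max 0 (x - p) \<ge> 0" "v * max 0 (y - p) \<ge> 0" using assms by auto
  have "u * x + v * y - p = u * (x - p) + v * (y - p) + ((u + v) - 1) * p" by algebra
  then have "u * x + v * y - p = u * (x - p) + v * (y - p)" using assms(3) by simp
  then show ?thesis using a b by linarith
qed

lemma pl_convex:
  fixes c p :: "nat \<Rightarrow> real"
  assumes "\<And>k. k \<in> A \<Longrightarrow> c k \<ge> 0"
  shows "convex_on UNIV (\<lambda>x. a + b * x + (\<Sum>k\<in>A. c k * max 0 (x - p k)))"
  unfolding convex_on_def
proof (intro conjI ballI allI impI)
  fix x y u v :: real
  assume uv: "0 \<le> u" "0 \<le> v" "u + v = 1"
  have "(\<Sum>k\<in>A. c k * max 0 ((u *\<^sub>R x + v *\<^sub>R y) - p k)) \<le>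
        (\<Sum>k\<in>A. u * (c k * max 0 (x - p k)) + v * (c k * max 0 (y - p k)))"
  proof (rule sum_mono)
    fix k assume "k \<in> A"
    then have "c k * max 0 (u * x + v * y - p k) \<le> c k * (u * max 0 (x - p k) + v * max 0 (y - p k))"
      using assms max0_convex_ineq[OF uv] by (intro mult_left_mono) auto
    then show "c k * max 0 ((u *\<^sub>R x + v *\<^sub>R y) - p k) \<le> u * (c k * max 0 (x - p k)) + v * (c k * max 0 (y - p k))"
      by (simp add: algebra_simps)
  qed
  also have "\<dots> = u * (\<Sum>k\<in>A. c k * max 0 (x - p k)) + v * (\<Sum>k\<in>A. c k * max 0 (y - p k))"
    by (simp add: sum.distrib sum_distrib_left)
  finally have "(\<Sum>k\<in>A. c k * max 0 ((u *\<^sub>R x + v *\<^sub>R y) - p k)) \<le> u * (\<Sum>k\<in>A. c k * max 0 (x - p k)) + v * (\<Sum>k\<in>A. c k * max 0 (y - p k))" .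
  moreover have "a + b * (u *\<^sub>R x + v *\<^sub>R y) = u * (a + b * x) + v * (a + b * y)"
    using uv(3) by (simp add: algebra_simps) (metis distrib_left mult.right_neutral)
  ultimately show "a + b * (u *\<^sub>R x + v *\<^sub>R y) + (\<Sum>k\<in>A. c k * max 0 ((u *\<^sub>R x + v *\<^sub>R y) - p k))
         \<le> u * (a + b * x + (\<Sum>k\<in>A. c k * max 0 (x - p k))) + v * (a + b * y + (\<Sum>k\<in>A. c k * max 0 (y - p k)))"
    by (simp add: algebra_simps)
qed simp

lemma FP_convex: "convex_on UNIV (FP h xs)"
proof -
  have "convex_on UNIV (\<lambda>x. 0 + 0 * x + (\<Sum>k\<in>{1..<length xs - 1}. \<bar>slp h xs k - slp h xs (k-1)\<bar> * max 0 (x - xs!k)))"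
    by (rule pl_convex) auto
  then show ?thesis by (simp add: FP_def[abs_def])
qed

lemma GP_convex: "convex_on UNIV (\<lambda>x. HP h xs x + FP h xs x)"
proof -
  have "convex_on UNIV (\<lambda>x. (h (xs!0) - slp h xs 0 * xs!0) + slp h xs 0 * x +
     (\<Sum>k\<in>{1..<length xs - 1}. ((slp h xs k - slp h xs (k-1)) + \<bar>slp h xs k - slp h xs (k-1)\<bar>) * max 0 (x - xs!k)))"
    by (rule pl_convex) auto
  moreover have "\<And>x. HP h xs x + FP h xs x = (h (xs!0) - slp h xs 0 * xs!0) + slp h xs 0 * x +
     (\<Sum>k\<in>{1..<length xs - 1}. ((slp h xs k - slp h xs (k-1)) + \<bar>slp h xs k - slp h xs (k-1)\<bar>) * max 0 (x - xs!k))"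
    unfolding HP_def FP_def distrib_right sum.distrib by (simp add: right_diff_distrib)
  ultimately show ?thesis by simp
qed

lemma FP_nonneg: "0 \<le> FP h xs x"
  unfolding FP_def by (intro sum_nonneg) auto

lemma FP_upper:
  assumes "\<forall>k<length xs. 0 \<le> xs!k"
  shows "FP h xs x \<le> svar h xs * \<bar>x\<bar>"
  unfolding FP_def svar_def sum_distrib_right
proof (rule sum_mono)
  fix k assume "k \<in> {1..<length xs - 1}"
  then have "0 \<le> xs!k" using assms by auto
  then have "max 0 (x - xs!k) \<le> \<bar>x\<bar>" by auto
  then show "\<bar>slp h xs k - slp h xs (k-1)\<bar> * max 0 (x - xs!k) \<le> \<bar>slp h xs k - slp h xs (k-1)\<bar> * \<bar>x\<bar>"
    by (intro mult_left_mono) auto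
qed

lemma FP_lip: "FP h xs x - FP h xs y \<le> svar h xs * \<bar>x - y\<bar>"
  unfolding FP_def svar_def sum_distrib_right sum_subtractf[symmetric]
proof (rule sum_mono)
  fix k
  have "max 0 (x - xs!k) - max 0 (y - xs!k) \<le> \<bar>x - y\<bar>" by auto
  then have "\<bar>slp h xs k - slp h xs (k-1)\<bar> * (max 0 (x - xs!k) - max 0 (y - xs!k)) \<le> \<bar>slp h xs k - slp h xs (k-1)\<bar> * \<bar>x - y\<bar>"
    by (intro mult_left_mono) auto
  then show "\<bar>slp h xs k - slp h xs (k-1)\<bar> * max 0 (x - xs!k) - \<bar>slp h xs k - slp h xs (k-1)\<bar> * max 0 (y - xs!k) \<le> \<bar>slp h xs k - slp h xs (k-1)\<bar> * \<bar>x - y\<bar>"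
    by (simp add: algebra_simps)
qed

definition ispart :: "real \<Rightarrow> real list \<Rightarrow> bool" where
  "ispart L xs \<longleftrightarrow> sorted_wrt (<) xs \<and> 2 \<le> length xs \<and> xs!0 = 0 \<and> xs!(length xs - 1) = L"

lemma ispart_nonneg: "ispart L xs \<Longrightarrow> k < length xs \<Longrightarrow> 0 \<le> xs!k"
  unfolding ispart_def using sw_le[of xs 0 k] by auto

lemma ispart_le: "ispart L xs \<Longrightarrow> k < length xs \<Longrightarrow> xs!k \<le> L"
  unfolding ispart_def using sw_le[of xs k "length xs - 1"] by auto

lemma ispart_from_set:
  fixes B :: "real set"
  assumes "finite B" "B \<subseteq> {0..L}" "0 \<in> B" "L \<in> B" "0 < L"
  shows "ispart L (sorted_list_of_set B)"
proof -
  define xs where "xs = sorted_list_of_set B"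
  have s: "sorted_wrt (<) xs" by (simp add: xs_def)
  have set: "set xs = B" using assms(1) by (simp add: xs_def)
  have dist: "distinct xs" by (simp add: xs_def)
  have "card B \<ge> 2"
  proof -
    have "{0, L} \<subseteq> B" using assms by auto
    then have "card {0, L} \<le> card B" using assms(1) by (rule card_mono[rotated])
    then show ?thesis using assms(5) by simp
  qed
  then have len: "length xs \<ge> 2" using dist set distinct_card by fastforce
  obtain i where i: "i < length xs" "xs!i = 0" using set assms(3) by (metis in_set_conv_nth)
  obtain j where j: "j < length xs" "xs!j = L" using set assms(4) by (metis in_set_conv_nth)
  have "xs!0 \<le> 0" using sw_le[OF s, of 0 i] i by simp
  moreover have "xs!0 \<ge> 0" using set assms(2) len by (metis atLeastAtMost_iff nth_mem subsetD le_trans zero_less_numeral less_le_trans order.strict_implies_order)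
  moreover have "xs!(length xs - 1) \<ge> L" using sw_le[OF s, of j "length xs - 1"] j by simp
  moreover have "xs!(length xs - 1) \<le> L" using set assms(2) len
    by (metis atLeastAtMost_iff diff_less nth_mem subsetD zero_less_numeral less_le_trans zero_less_one)
  ultimately show ?thesis using s len unfolding ispart_def xs_def by auto
qed

lemma compact_box: "compact (PiE UNIV (\<lambda>x::real. {0..V * \<bar>x\<bar>}) :: (real \<Rightarrow> real) set)"
proof -
  have "compactin (product_topology (\<lambda>i. euclidean) UNIV) (PiE UNIV (\<lambda>x::real. {0..V * \<bar>x\<bar>}))"
    by (simp add: compactin_PiE)
  then show ?thesis by (simp add: euclidean_product_topology)
qed

lemma cont_eval [continuous_intros]: "continuous_on UNIV (\<lambda>f::real\<Rightarrow>real. f x)"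
  by simp

lemma DC1:
  fixes h :: "real \<Rightarrow> real"
  assumes L: "0 < L" and hc: "continuous_on {0..L} h"
    and var: "\<And>xs. ispart L xs \<Longrightarrow> svar h xs \<le> V"
  shows "\<exists>g f. continuous_on {0..L} g \<and> convex_on {0..L} g \<and>
                continuous_on {0..L} f \<and> convex_on {0..L} f \<and> (\<forall>t\<in>{0..L}. h t = g t - f t)"
proof -
  have V0: "0 \<le> V"
  proof -
    have "ispart L [0, L]" using L by (simp add: ispart_def)
    then have "svar h [0, L] \<le> V" by (rule var)
    then show ?thesis by (simp add: svar_def)
  qed
  define K where "K = (PiE UNIV (\<lambda>x::real. {0..V * \<bar>x\<bar>}) :: (real \<Rightarrow> real) set)"
  define I where "I = {A :: real set. finite A \<and> A \<subseteq> {0..L}}"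
  define T where "T A = closure (FP h ` {xs. ispart L xs \<and> A \<subseteq> set xs})" for A
  have FPK: "FP h xs \<in> K" if "ispart L xs" for xs
  proof -
    have "FP h xs x \<le> V * \<bar>x\<bar>" for x
    proof -
      have "FP h xs x \<le> svar h xs * \<bar>x\<bar>" using ispart_nonneg[OF that] by (intro FP_upper) auto
      also have "\<dots> \<le> V * \<bar>x\<bar>" using var[OF that] by (intro mult_right_mono) auto
      finally show ?thesis .
    qed
    then show ?thesis using FP_nonneg unfolding K_def by (auto simp: PiE_UNIV_domain)
  qed
  have "K \<inter> (\<Inter>A\<in>I. T A) \<noteq> {}"
  proof (rule compact_imp_fip_image)
    show "compact K" unfolding K_def by (rule compact_box)
    show "closed (T A)" for A unfolding T_def by simp
    fix I' assume I': "finite I'" "I' \<subseteq> I"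
    define B where "B = \<Union>I' \<union> {0, L}"
    have Bf: "finite B" using I' unfolding B_def I_def by auto
    have BL: "B \<subseteq> {0..L}" using I' L unfolding B_def I_def by auto
    define xs where "xs = sorted_list_of_set B"
    have xsp: "ispart L xs" unfolding xs_def by (rule ispart_from_set) (use Bf BL L B_def in auto)
    have "FP h xs \<in> T A" if "A \<in> I'" for A
    proof -
      have "set xs = B" using Bf unfolding xs_def by simp
      then have "A \<subseteq> set xs" using that unfolding B_def by auto
      then show ?thesis unfolding T_def using xsp by (intro subsetD[OF closure_subset]) auto
    qed
    then show "K \<inter> (\<Inter>A\<in>I'. T A) \<noteq> {}" using FPK[OF xsp] by auto
  qed
  then obtain f where fK: "f \<in> K" and fT: "\<And>A. A \<in> I \<Longrightarrow> f \<in> T A" by auto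
  have transfer: "f \<in> C" if "closed C" "A \<in> I" "\<And>xs. ispart L xs \<Longrightarrow> A \<subseteq> set xs \<Longrightarrow> FP h xs \<in> C" for C A
  proof -
    have "T A \<subseteq> C" unfolding T_def using that by (intro closure_minimal) auto
    then show ?thesis using fT[OF that(2)] by auto
  qed
  have I0: "{} \<in> I" by (simp add: I_def)
  have lip1: "f x - f y \<le> V * \<bar>x - y\<bar>" for x y
  proof -
    have "f \<in> {\<phi>. \<phi> x - \<phi> y \<le> V * \<bar>x - y\<bar>}"
    proof (rule transfer[OF _ I0])
      show "closed {\<phi>::real\<Rightarrow>real. \<phi> x - \<phi> y \<le> V * \<bar>x - y\<bar>}"
        by (intro closed_Collect_le continuous_intros)
      fix xs assume xs: "ispart L xs"
      have "svar h xs * \<bar>x - y\<bar> \<le> V * \<bar>x - y\<bar>" using var[OF xs] by (intro mult_right_mono) auto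
      then show "FP h xs \<in> {\<phi>. \<phi> x - \<phi> y \<le> V * \<bar>x - y\<bar>}"
        using FP_lip[of h xs x y] by auto
    qed
    then show ?thesis by simp
  qed
  have flip: "V-lipschitz_on {0..L} f"
  proof (rule lipschitz_onI)
    fix x y
    show "dist (f x) (f y) \<le> V * dist x y"
      using lip1[of x y] lip1[of y x] by (simp add: dist_real_def abs_minus_commute)
  qed (rule V0)
  have fcont: "continuous_on {0..L} f" by (rule lipschitz_on_continuous_on[OF flip])
  have fconv: "convex_on {0..L} f"
    unfolding convex_on_def
  proof (intro conjI ballI allI impI)
    fix x y u v :: real assume uv: "0 \<le> u" "0 \<le> v" "u + v = 1"
    have "f \<in> {\<phi>. \<phi> (u * x + v * y) \<le> u * \<phi> x + v * \<phi> y}"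
    proof (rule transfer[OF _ I0])
      show "closed {\<phi>::real\<Rightarrow>real. \<phi> (u * x + v * y) \<le> u * \<phi> x + v * \<phi> y}"
        by (intro closed_Collect_le continuous_intros)
      fix xs assume "ispart L xs"
      show "FP h xs \<in> {\<phi>. \<phi> (u * x + v * y) \<le> u * \<phi> x + v * \<phi> y}"
        using FP_convex[of h xs] uv unfolding convex_on_def by auto
    qed
    then show "f (u *\<^sub>R x + v *\<^sub>R y) \<le> u * f x + v * f y" by simp
  qed (simp add: convex_real_interval)
  define g where "g t = h t + f t" for t
  have gcont: "continuous_on {0..L} g" unfolding g_def by (intro continuous_intros hc fcont)
  have gconv: "convex_on {0..L} g"
    unfolding convex_on_def
  proof (intro conjI ballI allI impI)
    fix x y u v :: real assume xy: "x \<in> {0..L}" "y \<in> {0..L}" and uv: "0 \<le> u" "0 \<le> v" "u + v = 1"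
    define w where "w = u * x + v * y"
    have w: "w \<in> {0..L}" using convex_real_interval(5)[of 0 L] xy uv unfolding convex_def w_def by auto
    have AI: "{x, y, w} \<in> I" using xy w by (simp add: I_def)
    have "f \<in> {\<phi>. h w + \<phi> w \<le> u * (h x + \<phi> x) + v * (h y + \<phi> y)}"
    proof (rule transfer[OF _ AI])
      show "closed {\<phi>::real\<Rightarrow>real. h w + \<phi> w \<le> u * (h x + \<phi> x) + v * (h y + \<phi> y)}"
        by (intro closed_Collect_le continuous_intros)
      fix xs assume xs: "ispart L xs" "{x, y, w} \<subseteq> set xs"
      have hp: "HP h xs p = h p" if "p \<in> set xs" for p
        using that xs(1) HP_interp[of xs _ h] unfolding ispart_def by (metis in_set_conv_nth)
      have "HP h xs w + FP h xs w \<le> u * (HP h xs x + FP h xs x) + v * (HP h xs y + FP h xs y)"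
        using GP_convex[of h xs] uv unfolding convex_on_def w_def by auto
      then show "FP h xs \<in> {\<phi>. h w + \<phi> w \<le> u * (h x + \<phi> x) + v * (h y + \<phi> y)}"
        using hp xs(2) by auto
    qed
    then show "g (u *\<^sub>R x + v *\<^sub>R y) \<le> u * g x + v * g y" by (simp add: g_def w_def)
  qed (simp add: convex_real_interval)
  show ?thesis
    by (rule exI[of _ g], rule exI[of _ f]) (use gcont gconv fcont fconv in \<open>auto simp: g_def\<close>)
qed



lemma unit_diff_sq:
  fixes a b :: complex
  assumes "norm a = 1" "norm b = 1"
  shows "(norm (a - b))\<^sup>2 = 2 - 2 * (a \<bullet> b)"
proof -
  have "(norm (a - b))\<^sup>2 = a \<bullet> a - 2 * (a \<bullet> b) + b \<bullet> b"
    by (simp add: power2_norm_eq_inner inner_diff_left inner_diff_right inner_commute)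
  also have "a \<bullet> a = 1" using assms(1) by (metis power2_norm_eq_inner power_one)
  also have "b \<bullet> b = 1" using assms(2) by (metis power2_norm_eq_inner power_one)
  finally show ?thesis by simp
qed

lemma unit_inner_lower:
  fixes e e1 :: complex
  assumes "norm e = 1" "norm e1 = 1"
  shows "e1 \<bullet> e \<ge> 1 - norm (e - e1)"
proof -
  define n where "n = norm (e - e1)"
  have n2: "n\<^sup>2 = 2 - 2 * (e \<bullet> e1)" unfolding n_def by (rule unit_diff_sq[OF assms])
  have "n \<le> 2" unfolding n_def using norm_triangle_ineq4[of e e1] assms by simp
  moreover have "n \<ge> 0" unfolding n_def by simp
  ultimately have "n\<^sup>2 \<le> 2 * n" by (simp add: power2_eq_square mult_right_mono)
  then show ?thesis using n2 by (simp add: inner_commute n_def[symmetric])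
qed

lemma seg_inner:
  fixes w e :: complex
  assumes "norm e = 1"
  shows "w \<bullet> e \<ge> norm w * (1 - norm (e - sgn w))"
proof (cases "w = 0")
  case True then show ?thesis by simp
next
  case False
  have w: "w = norm w *\<^sub>R sgn w" using False by (simp add: sgn_div_norm)
  have "sgn w \<bullet> e \<ge> 1 - norm (e - sgn w)" using assms False by (intro unit_inner_lower) (auto simp: norm_sgn)
  then have "norm w * (sgn w \<bullet> e) \<ge> norm w * (1 - norm (e - sgn w))" by (intro mult_left_mono) auto
  also have "norm w * (sgn w \<bullet> e) = w \<bullet> e" by (subst (2) w) simp
  finally show ?thesis .
qed

lemma one_minus_cos_le: fixes x :: real shows "1 - cos x \<le> x\<^sup>2 / 2"
proof -
  have "cos x = 1 - 2 * sin (x/2) ^ 2" using cos_double_sin[of "x/2"] by simp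
  moreover have "(sin (x/2))\<^sup>2 \<le> (x/2)\<^sup>2"
    using abs_sin_x_le_abs_x[of "x/2"] by (metis abs_ge_zero power2_abs power_mono)
  ultimately show ?thesis by (simp add: power_divide)
qed

lemma sgn_diff_le_vangle:
  fixes u v :: complex
  shows "norm (sgn v - sgn u) \<le> vangle u v"
proof (cases "u = 0 \<or> v = 0")
  case True
  have "1 \<le> pi / 2" using pi_gt3 by simp
  moreover have "norm (sgn v - sgn u) \<le> 1" using True by (auto simp: norm_sgn norm_minus_commute)
  ultimately show ?thesis using True by (auto simp: vangle_def)
next
  case False
  define c where "c = (u \<bullet> v) / (norm u * norm v)"
  have cs: "\<bar>u \<bullet> v\<bar> \<le> norm u * norm v" by (rule Cauchy_Schwarz_ineq2)
  have pos: "norm u * norm v > 0" using False by simp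
  have c1: "-1 \<le> c" "c \<le> 1" using cs pos unfolding c_def by (auto simp: abs_le_iff divide_le_eq le_divide_eq)
  define \<theta> where "\<theta> = arccos c"
  have th: "0 \<le> \<theta>" "cos \<theta> = c" using c1 arccos_bounded[of c] cos_arccos[of c] unfolding \<theta>_def by auto
  have "sgn v \<bullet> sgn u = c" using False unfolding c_def by (simp add: sgn_div_norm inner_commute field_simps)
  then have "(norm (sgn v - sgn u))\<^sup>2 = 2 - 2 * c" using False by (subst unit_diff_sq) (auto simp: norm_sgn)
  also have "\<dots> \<le> \<theta>\<^sup>2" using one_minus_cos_le[of \<theta>] th by simp
  finally have "(norm (sgn v - sgn u))\<^sup>2 \<le> \<theta>\<^sup>2" .
  then have "norm (sgn v - sgn u) \<le> \<theta>" using th(1) by (rule power2_le_imp_le)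
  then show ?thesis by (simp add: vangle_def c_def \<theta>_def)
qed

fun plen :: "complex list \<Rightarrow> real" where
  "plen (a # b # r) = cmod (b - a) + plen (b # r)"
| "plen _ = 0"

fun crot :: "complex list \<Rightarrow> real" where
  "crot (a # b # c # r) = cmod (sgn (c - b) - sgn (b - a)) + crot (b # c # r)"
| "crot _ = 0"

fun vrot :: "complex list \<Rightarrow> real" where
  "vrot (a # b # c # r) = vangle (b - a) (c - b) + vrot (b # c # r)"
| "vrot _ = 0"

lemma plen_nonneg: "0 \<le> plen ws"
  by (induction ws rule: plen.induct) auto

lemma crot_nonneg: "0 \<le> crot ws"
  by (induction ws rule: crot.induct) auto

lemma crot_le_vrot: "crot ws \<le> vrot ws"
  by (induction ws rule: crot.induct) (auto intro: add_mono sgn_diff_le_vangle)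

lemma chord_aux:
  assumes "norm e = 1"
  shows "(last (a # b # r) - a) \<bullet> e \<ge> plen (a # b # r) * (1 - norm (e - sgn (b - a)) - crot (a # b # r))"
  using assms
proof (induction r arbitrary: a b)
  case Nil
  have "(b - a) \<bullet> e \<ge> norm (b - a) * (1 - norm (e - sgn (b - a)))" by (rule seg_inner[OF Nil])
  then show ?case by simp
next
  case (Cons c r)
  have IH: "(last (b # c # r) - b) \<bullet> e \<ge> plen (b # c # r) * (1 - norm (e - sgn (c - b)) - crot (b # c # r))"
    by (rule Cons.IH[OF Cons.prems])
  define X where "X = 1 - norm (e - sgn (b - a)) - crot (a # b # c # r)"
  have tri: "norm (e - sgn (c - b)) \<le> norm (e - sgn (b - a)) + norm (sgn (c - b) - sgn (b - a))"
    using norm_triangle_ineq[of "e - sgn (b - a)" "sgn (b - a) - sgn (c - b)"]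
    by (simp add: norm_minus_commute)
  have "1 - norm (e - sgn (c - b)) - crot (b # c # r) \<ge> X"
    using tri unfolding X_def by simp
  then have A: "(last (b # c # r) - b) \<bullet> e \<ge> plen (b # c # r) * X"
    using IH plen_nonneg[of "b # c # r"] by (meson mult_left_mono order_trans)
  have "(b - a) \<bullet> e \<ge> norm (b - a) * (1 - norm (e - sgn (b - a)))" by (rule seg_inner[OF Cons.prems])
  moreover have "norm (b - a) * (1 - norm (e - sgn (b - a))) \<ge> norm (b - a) * X"
    unfolding X_def using crot_nonneg[of "a # b # c # r"] by (intro mult_left_mono) auto
  ultimately have B: "(b - a) \<bullet> e \<ge> norm (b - a) * X" by linarith
  have "(last (a # b # c # r) - a) \<bullet> e = (b - a) \<bullet> e + (last (b # c # r) - b) \<bullet> e"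
    by (simp add: inner_diff_left)
  also have "\<dots> \<ge> norm (b - a) * X + plen (b # c # r) * X" using A B by linarith
  finally show ?case unfolding X_def by (simp add: algebra_simps)
qed

lemma chord_bound:
  assumes "a \<noteq> b"
  shows "norm (last (a # b # r) - a) \<ge> plen (a # b # r) * (1 - crot (a # b # r))"
proof -
  define e where "e = sgn (b - a)"
  have e1: "norm e = 1" using assms by (simp add: e_def norm_sgn)
  have "plen (a # b # r) * (1 - crot (a # b # r)) \<le> (last (a # b # r) - a) \<bullet> e"
    using chord_aux[OF e1, of a b r] by (simp add: e_def)
  also have "\<dots> \<le> norm (last (a # b # r) - a) * norm e" by (rule norm_cauchy_schwarz)
  finally show ?thesis using e1 by simp
qed

lemma crot_append:
  assumes "xs \<noteq> []"
  shows "crot (xs @ ys) \<ge> crot xs + crot (last xs # ys)"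
  using assms
proof (induction xs rule: crot.induct)
  case (1 a b c r)
  then have "crot ((b # c # r) @ ys) \<ge> crot (b # c # r) + crot (last (b # c # r) # ys)" by blast
  then show ?case by simp
next
  case ("2_1") then show ?case by simp
next
  case ("2_2" a) then show ?case by (cases ys) auto
next
  case ("2_3" a b) then show ?case
    by (cases ys) (auto simp: crot_nonneg)
qed

lemma plen_sum: "plen ws = (\<Sum>i<length ws - 1. cmod (ws ! Suc i - ws ! i))"
proof (induction ws rule: plen.induct)
  case (1 a b r)
  have "length (a#b#r) - 1 = Suc (length (b#r) - 1)" by simp
  then show ?case by (simp only: sum.lessThan_Suc_shift) (simp add: 1)
qed auto

lemma vrot_sum0: "vrot ws = (\<Sum>i<length ws - 2. vangle (ws ! Suc i - ws ! i) (ws ! Suc (Suc i) - ws ! Suc i))"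
proof (induction ws rule: vrot.induct)
  case (1 a b c r)
  have "length (a#b#c#r) - 2 = Suc (length (b#c#r) - 2)" by simp
  then show ?case by (simp only: sum.lessThan_Suc_shift) (simp add: 1)
qed auto

lemma vrot_sum: "vrot ws = (\<Sum>i\<in>{1..<length ws - 1}. vangle (ws ! i - ws ! (i - 1)) (ws ! Suc i - ws ! i))"
proof (cases "length ws \<ge> 2")
  case True
  have e: "{1..<length ws - 1} = {Suc 0..<Suc (length ws - 2)}" using True by auto
  show ?thesis unfolding vrot_sum0 e sum.shift_bounds_Suc_ivl lessThan_atLeast0 by simp
next
  case False
  then have "length ws - 2 = 0" "length ws - 1 \<le> 1" by auto
  then show ?thesis unfolding vrot_sum0 by simp
qed

lemma crot_sum0: "crot ws = (\<Sum>i<length ws - 2. cmod (sgn (ws ! Suc (Suc i) - ws ! Suc i) - sgn (ws ! Suc i - ws ! i)))"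
proof (induction ws rule: crot.induct)
  case (1 a b c r)
  have "length (a#b#c#r) - 2 = Suc (length (b#c#r) - 2)" by simp
  then show ?case by (simp only: sum.lessThan_Suc_shift) (simp add: 1)
qed auto

lemma crot_sum: "crot ws = (\<Sum>i\<in>{1..<length ws - 1}. cmod (sgn (ws ! Suc i - ws ! i) - sgn (ws ! i - ws ! (i - 1))))"
proof (cases "length ws \<ge> 2")
  case True
  have e: "{1..<length ws - 1} = {Suc 0..<Suc (length ws - 2)}" using True by auto
  show ?thesis unfolding crot_sum0 e sum.shift_bounds_Suc_ivl lessThan_atLeast0 by simp
next
  case False
  then have "length ws - 2 = 0" "length ws - 1 \<le> 1" by auto
  then show ?thesis unfolding crot_sum0 by simp
qed

definition pp :: "real \<Rightarrow> real \<Rightarrow> real list \<Rightarrow> bool" where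
  "pp p q ps \<longleftrightarrow> sorted_wrt (<) ps \<and> 2 \<le> length ps \<and> hd ps = p \<and> last ps = q"

lemma hdlast: "2 \<le> length xs \<Longrightarrow> hd xs = xs!0 \<and> last xs = xs!(length xs - 1)"
  by (cases xs) (auto simp: last_conv_nth)

lemma pp_bounds: "pp p q ps \<Longrightarrow> x \<in> set ps \<Longrightarrow> p \<le> x \<and> x \<le> q"
proof -
  assume a: "pp p q ps" "x \<in> set ps"
  then obtain i where i: "i < length ps" "ps!i = x" by (metis in_set_conv_nth)
  have s: "sorted_wrt (<) ps" and l: "2 \<le> length ps" using a by (auto simp: pp_def)
  have "hd ps = ps!0" "last ps = ps!(length ps - 1)" using hdlast[OF l] by auto
  then show ?thesis using a(1) i sw_le[OF s, of 0 i] sw_le[OF s, of i "length ps - 1"] by (auto simp: pp_def)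
qed

lemma ispart_pp: "ispart L xs \<longleftrightarrow> pp 0 L xs"
proof -
  show ?thesis unfolding ispart_def pp_def using hdlast[of xs] by auto
qed

primrec catp :: "real \<Rightarrow> (nat \<Rightarrow> real list) \<Rightarrow> nat \<Rightarrow> real list" where
  "catp x0 ps 0 = [x0]"
| "catp x0 ps (Suc k) = catp x0 ps k @ tl (ps k)"

locale zarc =
  fixes z :: "real \<Rightarrow> complex" and L R :: real
  assumes Lpos: "0 < L"
    and zinj: "inj_on z {0..L}"
    and chord_le: "\<And>p q. 0 \<le> p \<Longrightarrow> p < q \<Longrightarrow> q \<le> L \<Longrightarrow> cmod (z q - z p) \<le> q - p"
    and approx: "\<And>p q e. 0 \<le> p \<Longrightarrow> p < q \<Longrightarrow> q \<le> L \<Longrightarrow> e > 0 \<Longrightarrow> \<exists>ps. pp p q ps \<and> plen (map z ps) \<ge> q - p - e"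
    and rotb: "\<And>ps. pp 0 L ps \<Longrightarrow> crot (map z ps) \<le> R"
begin

lemma piece:
  assumes pq: "0 \<le> p" "p < q" "q \<le> L" and e: "e > 0"
  shows "\<exists>ps. pp p q ps \<and> 1 - cmod (z q - z p) / (q - p) \<le> e + crot (map z ps)"
proof -
  obtain ps where ps: "pp p q ps" "plen (map z ps) \<ge> q - p - e * (q - p)"
    using approx[OF pq, of "e * (q - p)"] e pq by auto
  obtain a b r where abr: "ps = a # b # r"
    using ps(1) unfolding pp_def by (metis Suc_le_length_iff numeral_2_eq_2)
  have ap: "a = p" using ps(1) abr by (simp add: pp_def)
  have "a < b" using ps(1) abr by (simp add: pp_def)
  moreover have "a \<in> {0..L}" "b \<in> {0..L}" using pp_bounds[OF ps(1), of a] pp_bounds[OF ps(1), of b] abr pq by auto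
  ultimately have zab: "z a \<noteq> z b" using zinj by (metis inj_on_contraD less_irrefl)
  have "last (map z ps) = z (last ps)" using abr by (intro last_map) simp
  then have lastz: "last (map z ps) = z q" using ps(1) by (simp add: pp_def)
  have ch: "cmod (z q - z p) \<ge> plen (map z ps) * (1 - crot (map z ps))"
    using chord_bound[OF zab, of "map z r"] lastz abr ap by simp
  define c where "c = crot (map z ps)"
  have c0: "c \<ge> 0" unfolding c_def by (rule crot_nonneg)
  have d: "q - p > 0" using pq by simp
  have "1 - cmod (z q - z p) / (q - p) \<le> e + c"
  proof (cases "c \<ge> 1")
    case True
    have "cmod (z q - z p) / (q - p) \<ge> 0" using d by simp
    then show ?thesis using True e by linarith
  next
    case False
    have "plen (map z ps) * (1 - c) \<ge> (q - p) * (1 - e) * (1 - c)"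
      using ps(2) False by (intro mult_right_mono) (auto simp: algebra_simps)
    then have "cmod (z q - z p) \<ge> (q - p) * ((1 - e) * (1 - c))" using ch c_def by (simp add: mult.assoc)
    then have "cmod (z q - z p) / (q - p) \<ge> (1 - e) * (1 - c)" using d by (simp add: le_divide_eq mult.commute)
    moreover have "(1 - e) * (1 - c) \<ge> 1 - e - c" using e c0 by (simp add: algebra_simps)
    ultimately show ?thesis by linarith
  qed
  then show ?thesis using ps(1) c_def by blast
qed

lemma catp_props:
  assumes xs: "ispart L xs" and m: "m = length xs - 1"
    and ps: "\<And>k. k < m \<Longrightarrow> pp (xs!k) (xs!Suc k) (ps k)"
  shows "k \<le> m \<Longrightarrow> catp (xs!0) ps k \<noteq> [] \<and> sorted_wrt (<) (catp (xs!0) ps k) \<and>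
     hd (catp (xs!0) ps k) = xs!0 \<and> last (catp (xs!0) ps k) = xs!k \<and>
     (\<forall>y\<in>set (catp (xs!0) ps k). y \<le> xs!k) \<and> Suc k \<le> length (catp (xs!0) ps k) \<and>
     crot (map z (catp (xs!0) ps k)) \<ge> (\<Sum>j<k. crot (map z (ps j)))"
proof (induction k)
  case 0
  then show ?case by simp
next
  case (Suc k)
  define C where "C = catp (xs!0) ps k"
  have km: "k < m" using Suc.prems by simp
  have IH: "C \<noteq> [] \<and> sorted_wrt (<) C \<and> hd C = xs!0 \<and> last C = xs!k \<and>
     (\<forall>y\<in>set C. y \<le> xs!k) \<and> Suc k \<le> length C \<and> crot (map z C) \<ge> (\<Sum>j<k. crot (map z (ps j)))"
    using Suc km unfolding C_def by simp
  have P: "pp (xs!k) (xs!Suc k) (ps k)" using ps km by simp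
  then obtain b r where abr: "ps k = xs!k # b # r"
    unfolding pp_def by (metis Suc_le_length_iff numeral_2_eq_2 list.sel(1))
  have sP: "sorted_wrt (<) (ps k)" using P by (simp add: pp_def)
  have tlP: "tl (ps k) = b # r" using abr by simp
  have gt: "\<forall>y\<in>set (b # r). xs!k < y" using sP abr by simp
  have le: "\<forall>y\<in>set (b # r). y \<le> xs!Suc k" using pp_bounds[OF P] abr by simp
  have kk: "xs!k \<le> xs!Suc k" using xs km m unfolding ispart_def by (intro sw_le) auto
  have lastP: "last (ps k) = xs!Suc k" using P by (simp add: pp_def)
  have catS: "catp (xs!0) ps (Suc k) = C @ (b # r)" using tlP by (simp add: C_def)
  have sorted: "sorted_wrt (<) (C @ (b # r))"
    unfolding sorted_wrt_append using IH sP abr gt by (auto intro: le_less_trans)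
  have "crot (map z C @ map z (b # r)) \<ge> crot (map z C) + crot (last (map z C) # map z (b # r))"
    using IH by (intro crot_append) simp
  moreover have "last (map z C) = z (xs!k)" using IH by (simp add: last_map)
  ultimately have "crot (map z (C @ (b # r))) \<ge> crot (map z C) + crot (map z (ps k))"
    using abr by simp
  then have cr: "crot (map z (C @ (b # r))) \<ge> (\<Sum>j<Suc k. crot (map z (ps j)))" using IH by simp
  have "last (C @ (b # r)) = xs!Suc k" using lastP abr by simp
  moreover have "\<forall>y\<in>set (C @ (b # r)). y \<le> xs!Suc k" using IH le kk by auto
  ultimately show ?case unfolding catS using IH sorted cr by auto
qed

lemma rot_sum_bound:
  assumes xs: "ispart L xs" and m: "m = length xs - 1"
    and ps: "\<And>k. k < m \<Longrightarrow> pp (xs!k) (xs!Suc k) (ps k)"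
  shows "(\<Sum>k<m. crot (map z (ps k))) \<le> R"
proof -
  have m1: "1 \<le> m" using xs m by (auto simp: ispart_def)
  have P: "catp (xs!0) ps m \<noteq> [] \<and> sorted_wrt (<) (catp (xs!0) ps m) \<and>
     hd (catp (xs!0) ps m) = xs!0 \<and> last (catp (xs!0) ps m) = xs!m \<and>
     (\<forall>y\<in>set (catp (xs!0) ps m). y \<le> xs!m) \<and> Suc m \<le> length (catp (xs!0) ps m) \<and>
     crot (map z (catp (xs!0) ps m)) \<ge> (\<Sum>j<m. crot (map z (ps j)))"
    by (rule catp_props[OF xs m ps]) auto
  have "pp 0 L (catp (xs!0) ps m)" using P xs m m1 unfolding pp_def ispart_def by auto
  then have "crot (map z (catp (xs!0) ps m)) \<le> R" by (rule rotb)
  then show ?thesis using P by linarith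
qed

definition rr :: "real list \<Rightarrow> nat \<Rightarrow> real" where
  "rr xs k = cmod (z (xs!Suc k) - z (xs!k)) / (xs!Suc k - xs!k)"

lemma ispart_node_bounds:
  assumes "ispart L xs" "k < length xs - 1"
  shows "0 \<le> xs!k" "xs!k < xs!Suc k" "xs!Suc k \<le> L"
  using assms ispart_nonneg[OF assms(1), of k] ispart_le[OF assms(1), of "Suc k"]
  by (auto simp: ispart_def sorted_wrt_iff_nth_less)

lemma rr_le1: "ispart L xs \<Longrightarrow> k < length xs - 1 \<Longrightarrow> rr xs k \<le> 1"
  using chord_le ispart_node_bounds[of xs k] by (auto simp: rr_def divide_le_eq)

lemma rr_nonneg: "ispart L xs \<Longrightarrow> k < length xs - 1 \<Longrightarrow> 0 \<le> rr xs k"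
  using ispart_node_bounds[of xs k] by (auto simp: rr_def)

lemma sum_rr:
  assumes xs: "ispart L xs"
  shows "(\<Sum>k<length xs - 1. 1 - rr xs k) \<le> R"
proof (rule field_le_epsilon)
  fix e :: real assume e: "0 < e"
  define m where "m = length xs - 1"
  have m1: "1 \<le> m" using xs by (auto simp: ispart_def m_def)
  define e' where "e' = e / m"
  have e': "e' > 0" using e m1 by (simp add: e'_def)
  have "\<forall>k\<in>{..<m}. \<exists>P. pp (xs!k) (xs!Suc k) P \<and> 1 - rr xs k \<le> e' + crot (map z P)"
  proof
    fix k assume "k \<in> {..<m}"
    then have "k < length xs - 1" by (simp add: m_def)
    from ispart_node_bounds[OF xs this] show "\<exists>P. pp (xs!k) (xs!Suc k) P \<and> 1 - rr xs k \<le> e' + crot (map z P)"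
      unfolding rr_def by (intro piece e') auto
  qed
  then obtain ps where ps: "\<And>k. k < m \<Longrightarrow> pp (xs!k) (xs!Suc k) (ps k) \<and> 1 - rr xs k \<le> e' + crot (map z (ps k))"
    by (metis lessThan_iff)
  have "(\<Sum>k<m. 1 - rr xs k) \<le> (\<Sum>k<m. e' + crot (map z (ps k)))"
    using ps by (intro sum_mono) auto
  also have "\<dots> = m * e' + (\<Sum>k<m. crot (map z (ps k)))" by (simp add: sum.distrib)
  also have "m * e' = e" using m1 by (simp add: e'_def)
  also have "(\<Sum>k<m. crot (map z (ps k))) \<le> R" using ps by (intro rot_sum_bound[OF xs m_def]) auto
  finally show "(\<Sum>k<length xs - 1. 1 - rr xs k) \<le> R + e" unfolding m_def by simp
qed

lemma cdiff_bound:
  fixes sk sj :: complex and rk rj :: real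
  assumes "0 \<le> rk" "rk \<le> 1" "0 \<le> rj" "rj \<le> 1" "cmod sj \<le> 1"
  shows "cmod (of_real rk * sk - of_real rj * sj) \<le> cmod (sk - sj) + (1 - rk) + (1 - rj)"
proof -
  have "of_real rk * sk - of_real rj * sj = of_real rk * (sk - sj) + of_real (rk - rj) * sj"
    by (simp add: algebra_simps)
  then have "cmod (of_real rk * sk - of_real rj * sj) \<le> cmod (of_real rk * (sk - sj)) + cmod (of_real (rk - rj) * sj)"
    by (metis norm_triangle_ineq)
  also have "cmod (of_real rk * (sk - sj)) \<le> cmod (sk - sj)"
    using assms by (simp add: norm_mult mult_left_le_one_le)
  also have "cmod (of_real (rk - rj) * sj) = \<bar>rk - rj\<bar> * cmod sj"
    by (simp only: norm_mult norm_of_real)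
  also have "\<dots> \<le> \<bar>rk - rj\<bar>" using assms by (simp add: mult_left_le)
  also have "\<bar>rk - rj\<bar> \<le> (1 - rk) + (1 - rj)" using assms by linarith
  finally show ?thesis by simp
qed

lemma shift_sum_le:
  fixes f :: "nat \<Rightarrow> real"
  assumes "\<And>k. k < m \<Longrightarrow> 0 \<le> f k"
  shows "(\<Sum>k\<in>{1..<m}. f (k - 1)) \<le> (\<Sum>k<m. f k)"
proof (cases m)
  case 0 then show ?thesis by simp
next
  case (Suc n)
  have "(\<Sum>k\<in>{1..<m}. f (k - 1)) = (\<Sum>k\<in>{0..<n}. f k)"
    unfolding Suc by (simp only: One_nat_def sum.shift_bounds_Suc_ivl) simp
  also have "\<dots> \<le> (\<Sum>k<m. f k)" using assms unfolding Suc by (intro sum_mono2) auto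
  finally show ?thesis .
qed

lemma svar_bound:
  assumes xs: "ispart L xs" and hz: "\<And>k. k < length xs - 1 \<Longrightarrow> \<bar>slp h xs k - slp h xs (k - 1)\<bar> \<le>
      cmod ((z (xs!Suc k) - z (xs!k)) / of_real (xs!Suc k - xs!k) - (z (xs!k) - z (xs!(k-1))) / of_real (xs!k - xs!(k-1)))"
  shows "svar h xs \<le> 3 * R"
proof -
  define m where "m = length xs - 1"
  define u where "u k = z (xs!Suc k) - z (xs!k)" for k
  have cform: "(z (xs!Suc k) - z (xs!k)) / of_real (xs!Suc k - xs!k) = of_real (rr xs k) * sgn (u k)" if "k < m" for k
  proof -
    have d: "xs!Suc k - xs!k > 0" using ispart_node_bounds[OF xs, of k] that m_def by simp
    show ?thesis
    proof (cases "u k = 0")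
      case True then show ?thesis by (simp add: u_def rr_def)
    next
      case False
      then show ?thesis using d by (simp add: u_def rr_def sgn_div_norm scaleR_conv_of_real field_simps)
    qed
  qed
  have trm: "\<bar>slp h xs k - slp h xs (k - 1)\<bar> \<le> cmod (sgn (u k) - sgn (u (k - 1))) + (1 - rr xs k) + (1 - rr xs (k - 1))"
    if k: "k \<in> {1..<m}" for k
  proof -
    have k1: "k < m" "k - 1 < m" and ksuc: "Suc (k - 1) = k" using k by auto
    have "\<bar>slp h xs k - slp h xs (k - 1)\<bar> \<le> cmod (of_real (rr xs k) * sgn (u k) - of_real (rr xs (k-1)) * sgn (u (k-1)))"
      using hz[of k] k1 cform[of k] cform[of "k - 1"] ksuc by (simp add: m_def)
    also have "\<dots> \<le> cmod (sgn (u k) - sgn (u (k - 1))) + (1 - rr xs k) + (1 - rr xs (k - 1))"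
      using k1 rr_le1[OF xs] rr_nonneg[OF xs] by (intro cdiff_bound) (auto simp: m_def norm_sgn)
    finally show ?thesis .
  qed
  have "svar h xs \<le> (\<Sum>k\<in>{1..<m}. cmod (sgn (u k) - sgn (u (k - 1))) + (1 - rr xs k) + (1 - rr xs (k - 1)))"
    unfolding svar_def m_def[symmetric] using trm by (intro sum_mono) auto
  also have "\<dots> = (\<Sum>k\<in>{1..<m}. cmod (sgn (u k) - sgn (u (k - 1)))) + (\<Sum>k\<in>{1..<m}. 1 - rr xs k)
      + (\<Sum>k\<in>{1..<m}. 1 - rr xs (k - 1))" by (simp only: sum.distrib)
  also have "(\<Sum>k\<in>{1..<m}. cmod (sgn (u k) - sgn (u (k - 1)))) = crot (map z xs)"
  proof -
    have "crot (map z xs) = (\<Sum>i\<in>{1..<m}. cmod (sgn (map z xs ! Suc i - map z xs ! i) - sgn (map z xs ! i - map z xs ! (i - 1))))"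
      unfolding crot_sum m_def by simp
    also have "\<dots> = (\<Sum>k\<in>{1..<m}. cmod (sgn (u k) - sgn (u (k - 1))))"
      by (rule sum.cong) (auto simp: u_def m_def)
    finally show ?thesis by simp
  qed
  also have "crot (map z xs) \<le> R" using xs by (intro rotb) (simp add: ispart_pp[symmetric])
  also have "(\<Sum>k\<in>{1..<m}. 1 - rr xs k) \<le> R"
  proof -
    have "(\<Sum>k\<in>{1..<m}. 1 - rr xs k) \<le> (\<Sum>k<m. 1 - rr xs k)"
      using rr_le1[OF xs] by (intro sum_mono2) (auto simp: m_def)
    then show ?thesis using sum_rr[OF xs] by (simp add: m_def)
  qed
  also have "(\<Sum>k\<in>{1..<m}. 1 - rr xs (k - 1)) \<le> R"
  proof -
    have "(\<Sum>k\<in>{1..<m}. 1 - rr xs (k - 1)) \<le> (\<Sum>k<m. 1 - rr xs k)"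
      using rr_le1[OF xs] by (intro shift_sum_le) (auto simp: m_def)
    then show ?thesis using sum_rr[OF xs] by (simp add: m_def)
  qed
  finally show ?thesis by simp
qed

lemma svar_Re: "ispart L xs \<Longrightarrow> svar (\<lambda>t. Re (z t)) xs \<le> 3 * R"
proof (rule svar_bound)
  fix k
  show "\<bar>slp (\<lambda>t. Re (z t)) xs k - slp (\<lambda>t. Re (z t)) xs (k - 1)\<bar> \<le>
      cmod ((z (xs!Suc k) - z (xs!k)) / of_real (xs!Suc k - xs!k) - (z (xs!k) - z (xs!(k-1))) / of_real (xs!k - xs!(k-1)))"
    using abs_Re_le_cmod[of "(z (xs!Suc k) - z (xs!k)) / of_real (xs!Suc k - xs!k) - (z (xs!k) - z (xs!(k-1))) / of_real (xs!k - xs!(k-1))"]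
    by (cases k) (simp_all add: slp_def Re_divide_of_real)
qed

lemma svar_Im: "ispart L xs \<Longrightarrow> svar (\<lambda>t. Im (z t)) xs \<le> 3 * R"
proof (rule svar_bound)
  fix k
  show "\<bar>slp (\<lambda>t. Im (z t)) xs k - slp (\<lambda>t. Im (z t)) xs (k - 1)\<bar> \<le>
      cmod ((z (xs!Suc k) - z (xs!k)) / of_real (xs!Suc k - xs!k) - (z (xs!k) - z (xs!(k-1))) / of_real (xs!k - xs!(k-1)))"
    using abs_Im_le_cmod[of "(z (xs!Suc k) - z (xs!k)) / of_real (xs!Suc k - xs!k) - (z (xs!k) - z (xs!(k-1))) / of_real (xs!k - xs!(k-1))"]
    by (cases k) (simp_all add: slp_def Im_divide_of_real)
qed

end



lemma incr_strict:
  assumes "\<forall>i<n. t i < t (Suc i)" "i < j" "j \<le> n"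
  shows "(t i :: real) < t j"
  using assms(2,3)
proof (induction j)
  case 0 then show ?case by simp
next
  case (Suc j)
  show ?case
  proof (cases "i = j")
    case True then show ?thesis using assms(1) Suc.prems by simp
  next
    case False
    then have "t i < t j" using Suc by simp
    also have "t j < t (Suc j)" using assms(1) Suc.prems by simp
    finally show ?thesis .
  qed
qed

lemma inscribed_to_pp:
  assumes "inscribed_params p q t n"
  shows "pp p q (map t [0..<Suc n])"
proof -
  have inc: "\<forall>i<n. t i < t (Suc i)" "1 \<le> n" "t 0 = p" "t n = q" using assms by (auto simp: inscribed_params_def)
  have "sorted_wrt (<) (map t [0..<Suc n])"
    unfolding sorted_wrt_iff_nth_less using incr_strict[OF inc(1)] by (simp del: upt_Suc)
  moreover have "hd (map t [0..<Suc n]) = p" using inc by (simp add: hd_map del: upt_Suc)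
  moreover have "last (map t [0..<Suc n]) = q" using inc by (simp add: last_map del: upt_Suc)
  ultimately show ?thesis using inc(2) by (simp add: pp_def del: upt_Suc)
qed

lemma plen_inscribed: "plen (map z (map t [0..<Suc n])) = broken_line_length z t n"
  unfolding plen_sum broken_line_length_def by (intro sum.cong) (auto simp del: upt_Suc)

lemma vrot_nth: "vrot (map z ps) = broken_line_rotation z (\<lambda>i. ps ! i) (length ps - 1)"
  unfolding vrot_sum broken_line_rotation_def by (intro sum.cong) auto

theorem proposition2p10:
  fixes \<gamma> z :: "real \<Rightarrow> complex" and a b L :: real and \<phi> :: "real \<Rightarrow> real"
  assumes arc: "is_arc \<gamma> a b"
    and rot: "bounded_rotation \<gamma> a b"
    and len: "arc_len \<gamma> a b = ereal L"
    and reparam: "strict_mono_on {0..L} \<phi>" "continuous_on {0..L} \<phi>" "\<phi> ` {0..L} = {a..b}"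
    and z_def: "\<forall>t\<in>{0..L}. z t = \<gamma> (\<phi> t)"
    and arclength: "\<forall>t1\<in>{0..L}. \<forall>t2\<in>{0..L}. t1 < t2 \<longrightarrow> arc_len z t1 t2 = ereal (t2 - t1)"
  shows "\<exists>g1 f1 g2 f2 :: real \<Rightarrow> real.
           continuous_on {0..L} g1 \<and> convex_on {0..L} g1 \<and>
           continuous_on {0..L} f1 \<and> convex_on {0..L} f1 \<and>
           continuous_on {0..L} g2 \<and> convex_on {0..L} g2 \<and>
           continuous_on {0..L} f2 \<and> convex_on {0..L} f2 \<and>
           (\<forall>t\<in>{0..L}. Re (z t) = g1 t - f1 t \<and> Im (z t) = g2 t - f2 t)"
proof -
  have ab: "a < b" and gc: "continuous_on {a..b} \<gamma>" and ginj: "inj_on \<gamma> {a..b}"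
    using arc by (auto simp: is_arc_def)
  have Lpos: "0 < L"
  proof (rule ccontr)
    assume "\<not> 0 < L"
    then have "{0..L} \<subseteq> {0}" by auto
    then have "\<phi> ` {0..L} \<subseteq> {\<phi> 0}" by auto
    then have "{a..b} \<subseteq> {\<phi> 0}" using reparam(3) by simp
    then show False using ab by (metis atLeastAtMost_iff less_eq_real_def singletonD subset_eq not_less_iff_gr_or_eq)
  qed
  have phi_in: "\<phi> t \<in> {a..b}" if "t \<in> {0..L}" for t using reparam(3) that by auto
  have phi0: "\<phi> 0 = a"
  proof -
    obtain s where s: "s \<in> {0..L}" "\<phi> s = a" using reparam(3) ab by (metis atLeastAtMost_iff imageE order.refl less_imp_le)
    have "\<phi> 0 \<le> \<phi> s"
      using s Lpos strict_mono_onD[OF reparam(1), of 0 s] by (cases "s = 0") auto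
    then show ?thesis using s phi_in[of 0] Lpos by auto
  qed
  have phiL: "\<phi> L = b"
  proof -
    obtain s where s: "s \<in> {0..L}" "\<phi> s = b" using reparam(3) ab by (metis atLeastAtMost_iff imageE order.refl less_imp_le)
    have "\<phi> s \<le> \<phi> L"
      using s Lpos strict_mono_onD[OF reparam(1), of s L] by (cases "s = L") auto
    then show ?thesis using s phi_in[of L] Lpos by auto
  qed
  obtain R where R: "abs_curvature \<gamma> a b = ereal R"
  proof -
    have "inscribed_params a b (\<lambda>i. if i = 0 then a else b) 1" using ab by (simp add: inscribed_params_def)
    then have "ereal (broken_line_rotation \<gamma> (\<lambda>i. if i = 0 then a else b) 1) \<le> abs_curvature \<gamma> a b"
      unfolding abs_curvature_def by (intro SUP_upper2[of "((\<lambda>i. if i = 0 then a else b), 1)"]) auto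
    then have "abs_curvature \<gamma> a b \<noteq> - \<infinity>" by auto
    moreover have "abs_curvature \<gamma> a b \<noteq> \<infinity>" using rot by (simp add: bounded_rotation_def)
    ultimately show ?thesis using that by (cases "abs_curvature \<gamma> a b") auto
  qed
  have zinj: "inj_on z {0..L}"
  proof (rule inj_onI)
    fix x y assume xy: "x \<in> {0..L}" "y \<in> {0..L}" "z x = z y"
    show "x = y"
    proof (rule ccontr)
      assume "x \<noteq> y"
      then have "\<phi> x \<noteq> \<phi> y" using strict_mono_onD[OF reparam(1)] xy
        by (metis linorder_neq_iff less_irrefl)
      then have "\<gamma> (\<phi> x) \<noteq> \<gamma> (\<phi> y)" using ginj phi_in xy by (meson inj_onD)
      then show False using xy z_def by auto
    qed
  qed
  have chord_le: "cmod (z q - z p) \<le> q - p" if "0 \<le> p" "p < q" "q \<le> L" for p q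
  proof -
    have "inscribed_params p q (\<lambda>i. if i = 0 then p else q) 1" using that by (simp add: inscribed_params_def)
    then have "ereal (broken_line_length z (\<lambda>i. if i = 0 then p else q) 1) \<le> arc_len z p q"
      unfolding arc_len_def by (intro SUP_upper2[of "((\<lambda>i. if i = 0 then p else q), 1)"]) auto
    also have "arc_len z p q = ereal (q - p)" using arclength that by auto
    finally show ?thesis by (simp add: broken_line_length_def)
  qed
  have approx: "\<exists>ps. pp p q ps \<and> plen (map z ps) \<ge> q - p - e"
    if "0 \<le> p" "p < q" "q \<le> L" "e > 0" for p q e
  proof -
    have "ereal (q - p - e) < arc_len z p q" using arclength that by auto
    then obtain tn where tn: "tn \<in> {(t, n). inscribed_params p q t n}"
      "ereal (q - p - e) < ereal (broken_line_length z (fst tn) (snd tn))"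
      unfolding arc_len_def less_SUP_iff by blast
    obtain t n where "tn = (t, n)" by (cases tn)
    then have ins: "inscribed_params p q t n" and lt: "q - p - e < broken_line_length z t n" using tn by auto
    show ?thesis
      using inscribed_to_pp[OF ins] lt plen_inscribed[of z t n] by (intro exI[of _ "map t [0..<Suc n]"]) simp
  qed
  have rotb: "crot (map z ps) \<le> R" if ps: "pp 0 L ps" for ps
  proof -
    define n where "n = length ps - 1"
    have s: "sorted_wrt (<) ps" and l: "2 \<le> length ps" and h0: "ps!0 = 0" and hL: "ps!n = L"
      using ps hdlast[of ps] by (auto simp: pp_def n_def)
    have inL: "ps!i \<in> {0..L}" if "i \<le> n" for i
      using pp_bounds[OF ps, of "ps!i"] that l by (auto simp: n_def)
    have ins: "inscribed_params a b (\<lambda>i. \<phi> (ps!i)) n"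
      unfolding inscribed_params_def
    proof (intro conjI allI impI)
      show "1 \<le> n" using l by (simp add: n_def)
      show "\<phi> (ps!0) = a" using h0 phi0 by simp
      show "\<phi> (ps!n) = b" using hL phiL by simp
      fix i assume "i < n"
      then show "\<phi> (ps!i) < \<phi> (ps!Suc i)"
        using inL[of i] inL[of "Suc i"] s l strict_mono_onD[OF reparam(1)] by (auto simp: sorted_wrt_iff_nth_less n_def)
    qed
    have "crot (map z ps) \<le> vrot (map z ps)" by (rule crot_le_vrot)
    also have "vrot (map z ps) = broken_line_rotation z (\<lambda>i. ps ! i) n" by (simp add: vrot_nth n_def)
    also have "\<dots> = broken_line_rotation \<gamma> (\<lambda>i. \<phi> (ps!i)) n"
      unfolding broken_line_rotation_def using inL z_def by (intro sum.cong) auto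
    finally have A: "crot (map z ps) \<le> broken_line_rotation \<gamma> (\<lambda>i. \<phi> (ps!i)) n" .
    have "ereal (broken_line_rotation \<gamma> (\<lambda>i. \<phi> (ps!i)) n) \<le> abs_curvature \<gamma> a b"
      unfolding abs_curvature_def using ins by (intro SUP_upper2[of "((\<lambda>i. \<phi> (ps!i)), n)"]) auto
    then show ?thesis using A R by simp
  qed
  interpret zarc z L R
    by standard (use Lpos zinj chord_le approx rotb in auto)
  have zc: "continuous_on {0..L} z"
  proof -
    have "continuous_on {0..L} (\<gamma> \<circ> \<phi>)"
      using reparam(2,3) gc by (intro continuous_on_compose) auto
    then show ?thesis using z_def by (auto intro: continuous_on_cong[THEN iffD1])
  qed
  have "\<exists>g f. continuous_on {0..L} g \<and> convex_on {0..L} g \<and>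
                continuous_on {0..L} f \<and> convex_on {0..L} f \<and> (\<forall>t\<in>{0..L}. Re (z t) = g t - f t)"
    by (rule DC1[OF Lpos _ svar_Re]) (intro continuous_intros zc)
  then obtain g1 f1 where 1: "continuous_on {0..L} g1 \<and> convex_on {0..L} g1 \<and>
                continuous_on {0..L} f1 \<and> convex_on {0..L} f1 \<and> (\<forall>t\<in>{0..L}. Re (z t) = g1 t - f1 t)" by blast
  have "\<exists>g f. continuous_on {0..L} g \<and> convex_on {0..L} g \<and>
                continuous_on {0..L} f \<and> convex_on {0..L} f \<and> (\<forall>t\<in>{0..L}. Im (z t) = g t - f t)"
    by (rule DC1[OF Lpos _ svar_Im]) (intro continuous_intros zc)
  then obtain g2 f2 where 2: "continuous_on {0..L} g2 \<and> convex_on {0..L} g2 \<and>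
                continuous_on {0..L} f2 \<and> convex_on {0..L} f2 \<and> (\<forall>t\<in>{0..L}. Im (z t) = g2 t - f2 t)" by blast
  show ?thesis using 1 2 by blast
qed

end
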